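(* Let $G$ be an abelian group and let $A,B,C$ be nonempty finite subsets of $G$ with $1\in C$. Then either $ABC=AB$ or $|ABC|\geq |A|+|B|$.
   Context: For subsets $X,Y,Z$ of a multiplicative group $G$, $XY=\{xy\mid x\in X,\ y\in Y\}$ and $XYZ=\{xyz\mid x\in X,\ y\in Y,\ z\in Z\}$. *)

theory Defs
  imports "HOL-Algebra.Coset"
begin

end

theory Submission
  imports Defs
begin

context comm_group
begin

lemma mem_smult: "x \<in> A <#> B \<longleftrightarrow> (\<exists>a\<in>A. \<exists>b\<in>B. x = a \<otimes> b)"
  unfolding set_mult_def by auto

lemma finite_smult: "finite A \<Longrightarrow> finite B \<Longrightarrow> finite (A <#> B)"
  unfolding set_mult_def by auto

lemma smult_carrier: "A \<subseteq> carrier G \<Longrightarrow> B \<subseteq> carrier G \<Longrightarrow> A <#> B \<subseteq> carrier G"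
  unfolding set_mult_def by auto

lemma card_rimg: "X \<subseteq> carrier G \<Longrightarrow> c \<in> carrier G \<Longrightarrow> card ((\<lambda>x. x \<otimes> c) ` X) = card X"
  by (rule card_image) (unfold inj_on_def, metis right_cancel m_comm subsetD)

lemma card_limg: "X \<subseteq> carrier G \<Longrightarrow> c \<in> carrier G \<Longrightarrow> card ((\<lambda>x. c \<otimes> x) ` X) = card X"
  by (rule card_image) (unfold inj_on_def, metis right_cancel m_comm subsetD)

lemma rimg_eq: "finite X \<Longrightarrow> X \<subseteq> carrier G \<Longrightarrow> c \<in> carrier G \<Longrightarrow> (\<lambda>x. x \<otimes> c) ` X \<subseteq> X
  \<Longrightarrow> (\<lambda>x. x \<otimes> c) ` X = X"
  by (rule card_subset_eq) (auto simp: card_rimg)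

lemma rimg_inv: assumes "finite X" "X \<subseteq> carrier G" "g \<in> carrier G" "(\<lambda>x. x \<otimes> g) ` X \<subseteq> X"
  and "x \<in> X" shows "x \<otimes> inv g \<in> X"
proof -
  have "x \<in> (\<lambda>x. x \<otimes> g) ` X" using rimg_eq[OF assms(1-4)] assms(5) by simp
  then obtain y where y: "y \<in> X" "x = y \<otimes> g" by auto
  have "y \<in> carrier G" using y assms(2) by auto
  hence "x \<otimes> inv g = y" using y assms(3) by (simp add: m_assoc)
  thus ?thesis using y by simp
qed

lemma key:
  "finite B \<Longrightarrow> B \<subseteq> carrier G \<Longrightarrow> B \<noteq> {} \<Longrightarrow> finite A \<Longrightarrow> A \<subseteq> carrier G
   \<Longrightarrow> A \<noteq> {} \<Longrightarrow> c \<in> carrier G \<Longrightarrow> (\<lambda>x. x \<otimes> c) ` (A <#> B) \<noteq> A <#> B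
   \<Longrightarrow> card A + card B \<le> card ((A <#> B) \<union> (\<lambda>x. x \<otimes> c) ` (A <#> B))"
proof (induction "card B" arbitrary: A B rule: less_induct)
  case less
  note IH = less.hyps
  define X where "X = A <#> B"
  have Xfin: "finite X" unfolding X_def using less.prems finite_smult by blast
  have Xcar: "X \<subseteq> carrier G" unfolding X_def using less.prems smult_carrier by blast
  have Ac: "A \<subseteq> carrier G" and Bc: "B \<subseteq> carrier G" and cc: "c \<in> carrier G"
    using less.prems by auto
  have XcX: "(\<lambda>x. x \<otimes> c) ` X \<noteq> X" using less.prems X_def by simp
  have XUfin: "finite (X \<union> (\<lambda>x. x \<otimes> c) ` X)" using Xfin by simp
  show ?case unfolding X_def[symmetric]
  proof (rule ccontr)
    assume neg: "\<not> card A + card B \<le> card (X \<union> (\<lambda>x. x \<otimes> c) ` X)"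
    show False
    proof (cases "\<exists>b\<in>B. \<forall>a\<in>A. \<forall>b'\<in>B. b' \<otimes> (a \<otimes> inv b) \<in> A")
      case True
      then obtain b where bB: "b \<in> B" and hb: "\<And>a b'. a \<in> A \<Longrightarrow> b' \<in> B \<Longrightarrow> b' \<otimes> (a \<otimes> inv b) \<in> A"
        by blast
      have bc: "b \<in> carrier G" using bB Bc by auto
      define B' where "B' = (\<lambda>b'. b' \<otimes> inv b) ` B"
      have B'c: "B' \<subseteq> carrier G" unfolding B'_def using Bc bc by auto
      have stab: "(\<lambda>x. x \<otimes> g) ` X \<subseteq> X" if g: "g \<in> B'" for g
      proof
        fix y assume "y \<in> (\<lambda>x. x \<otimes> g) ` X"
        then obtain x where x: "x \<in> X" "y = x \<otimes> g" by auto
        obtain b' where b': "b' \<in> B" "g = b' \<otimes> inv b" using g B'_def by auto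
        obtain a b1 where ab: "a \<in> A" "b1 \<in> B" "x = a \<otimes> b1" using x X_def mem_smult by blast
        have carr: "a \<in> carrier G" "b1 \<in> carrier G" "b' \<in> carrier G" using ab b' Ac Bc by auto
        have "y = (b' \<otimes> (a \<otimes> inv b)) \<otimes> b1" using x ab b' carr bc by (simp add: m_ac)
        moreover have "b' \<otimes> (a \<otimes> inv b) \<in> A" using hb ab b' by auto
        ultimately show "y \<in> X" using ab unfolding X_def mem_smult by blast
      qed
      have stabinv: "x \<otimes> inv g \<in> X" if "g \<in> B'" "x \<in> X" for g x
        using rimg_inv[OF Xfin Xcar _ stab] that B'c by auto
      obtain x where xX: "x \<in> X" and xc: "x \<otimes> c \<notin> X"
      proof -
        have "\<not> (\<lambda>x. x \<otimes> c) ` X \<subseteq> X" using rimg_eq[OF Xfin Xcar cc] XcX by blast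
        thus ?thesis using that by blast
      qed
      have xcar: "x \<in> carrier G" using xX Xcar by auto
      define T where "T = (\<lambda>g. x \<otimes> c \<otimes> g) ` B'"
      have TX: "T \<subseteq> (\<lambda>x. x \<otimes> c) ` X"
      proof
        fix t assume "t \<in> T"
        then obtain g where g: "g \<in> B'" "t = x \<otimes> c \<otimes> g" using T_def by auto
        have "g \<in> carrier G" using g B'c by auto
        hence "t = (x \<otimes> g) \<otimes> c" using g xcar cc by (simp add: m_ac)
        moreover have "x \<otimes> g \<in> X" using stab[OF g(1)] xX by auto
        ultimately show "t \<in> (\<lambda>x. x \<otimes> c) ` X" by auto
      qed
      have TdX: "T \<inter> X = {}"
      proof (rule ccontr)
        assume "T \<inter> X \<noteq> {}"
        then obtain g where g: "g \<in> B'" "x \<otimes> c \<otimes> g \<in> X" using T_def by auto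
        have gc: "g \<in> carrier G" using g B'c by auto
        have "(x \<otimes> c \<otimes> g) \<otimes> inv g \<in> X" using stabinv g by auto
        moreover have "(x \<otimes> c \<otimes> g) \<otimes> inv g = x \<otimes> c" using gc xcar cc by (simp add: m_assoc)
        ultimately show False using xc by simp
      qed
      have cardB': "card B' = card B" unfolding B'_def using card_rimg[OF Bc] bc by simp
      have cardT: "card T = card B"
      proof -
        have "card T = card B'" unfolding T_def using card_limg[OF B'c, of "x \<otimes> c"] xcar cc by simp
        thus ?thesis using cardB' by simp
      qed
      have cardX: "card A \<le> card X"
      proof -
        have "(\<lambda>a. a \<otimes> b) ` A \<subseteq> X" unfolding X_def mem_smult image_subset_iff using bB by blast
        hence "card ((\<lambda>a. a \<otimes> b) ` A) \<le> card X" using Xfin card_mono by blast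
        thus ?thesis using card_rimg[OF Ac bc] by simp
      qed
      have Tfin: "finite T" unfolding T_def B'_def using less.prems by simp
      have "card (X \<union> T) = card X + card T" using card_Un_disjoint[OF Xfin Tfin] TdX by auto
      moreover have "card (X \<union> T) \<le> card (X \<union> (\<lambda>x. x \<otimes> c) ` X)"
        using TX XUfin by (intro card_mono) auto
      ultimately show False using neg cardT cardX by linarith
    next
      case False
      have D: "\<exists>D. D \<subseteq> X \<and> (\<lambda>x. x \<otimes> c) ` D \<subseteq> D \<and> (\<lambda>a. a \<otimes> b) ` A \<subseteq> D" if bB: "b \<in> B" for b
      proof -
        obtain a b0 where a: "a \<in> A" and b0: "b0 \<in> B" and nb0: "b0 \<otimes> (a \<otimes> inv b) \<notin> A"
          using False bB by blast
        have bc: "b \<in> carrier G" "a \<in> carrier G" using bB a Ac Bc by auto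
        define e where "e = a \<otimes> inv b"
        have ec: "e \<in> carrier G" unfolding e_def using bc by simp
        define B1 where "B1 = {b' \<in> B. b' \<otimes> e \<in> A}"
        define A1 where "A1 = A \<union> (\<lambda>b'. b' \<otimes> e) ` B"
        have bB1: "b \<in> B1" unfolding B1_def e_def using bB a bc by (simp add: m_ac)
        have B1B: "B1 \<subseteq> B" unfolding B1_def by auto
        have b0B1: "b0 \<notin> B1" unfolding B1_def e_def using nb0 by auto
        have cardB1: "card B1 < card B" using B1B b0B1 b0 less.prems(1) by (metis psubset_card_mono psubsetI)
        have B1fin: "finite B1" using B1B less.prems(1) finite_subset by blast
        have B1c: "B1 \<subseteq> carrier G" using B1B Bc by auto
        have B1ne: "B1 \<noteq> {}" using bB1 by auto
        have A1fin: "finite A1" unfolding A1_def using less.prems by simp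
        have A1c: "A1 \<subseteq> carrier G" unfolding A1_def using Ac Bc ec by auto
        have A1ne: "A1 \<noteq> {}" unfolding A1_def using less.prems by simp
        have int: "A \<inter> (\<lambda>b'. b' \<otimes> e) ` B = (\<lambda>b'. b' \<otimes> e) ` B1" unfolding B1_def by auto
        have cardsum: "card A1 + card B1 = card A + card B"
        proof -
          have "card A1 + card (A \<inter> (\<lambda>b'. b' \<otimes> e) ` B) = card A + card ((\<lambda>b'. b' \<otimes> e) ` B)"
            unfolding A1_def using card_Un_Int[of A "(\<lambda>b'. b' \<otimes> e) ` B"] less.prems by simp
          moreover have "card ((\<lambda>b'. b' \<otimes> e) ` B) = card B" using card_rimg[OF Bc ec] .
          moreover have "card (A \<inter> (\<lambda>b'. b' \<otimes> e) ` B) = card B1" using int card_rimg[OF B1c ec] by simp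
          ultimately show ?thesis by simp
        qed
        have sub: "A1 <#> B1 \<subseteq> X"
        proof
          fix y assume "y \<in> A1 <#> B1"
          then obtain a1 b1 where ab: "a1 \<in> A1" "b1 \<in> B1" "y = a1 \<otimes> b1" using mem_smult by blast
          show "y \<in> X"
          proof (cases "a1 \<in> A")
            case True
            thus ?thesis using ab B1B unfolding X_def mem_smult by blast
          next
            case False
            then obtain b' where b': "b' \<in> B" "a1 = b' \<otimes> e" using ab A1_def by auto
            have c2: "b' \<in> carrier G" "b1 \<in> carrier G" using b' ab B1c Bc by auto
            have "y = (b1 \<otimes> e) \<otimes> b'" using ab b' c2 ec by (simp add: m_ac)
            moreover have "b1 \<otimes> e \<in> A" using ab B1_def by auto
            ultimately show ?thesis using b' unfolding X_def mem_smult by blast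
          qed
        qed
        have stable: "(\<lambda>x. x \<otimes> c) ` (A1 <#> B1) = A1 <#> B1"
        proof (rule ccontr)
          assume ne: "(\<lambda>x. x \<otimes> c) ` (A1 <#> B1) \<noteq> A1 <#> B1"
          have "card A1 + card B1 \<le> card ((A1 <#> B1) \<union> (\<lambda>x. x \<otimes> c) ` (A1 <#> B1))"
            using IH[OF cardB1 B1fin B1c B1ne A1fin A1c A1ne cc ne] .
          also have "\<dots> \<le> card (X \<union> (\<lambda>x. x \<otimes> c) ` X)"
            using sub XUfin by (intro card_mono) auto
          finally show False using neg cardsum by linarith
        qed
        show ?thesis
        proof (intro exI conjI)
          show "A1 <#> B1 \<subseteq> X" by (rule sub)
          show "(\<lambda>x. x \<otimes> c) ` (A1 <#> B1) \<subseteq> A1 <#> B1" using stable by simp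
          show "(\<lambda>a. a \<otimes> b) ` A \<subseteq> A1 <#> B1" unfolding A1_def mem_smult image_subset_iff using bB1 by blast
        qed
      qed
      have "(\<lambda>x. x \<otimes> c) ` X \<subseteq> X"
      proof
        fix y assume "y \<in> (\<lambda>x. x \<otimes> c) ` X"
        then obtain x where x: "x \<in> X" "y = x \<otimes> c" by auto
        obtain a b where ab: "a \<in> A" "b \<in> B" "x = a \<otimes> b" using x X_def mem_smult by blast
        obtain D where D: "D \<subseteq> X" "(\<lambda>x. x \<otimes> c) ` D \<subseteq> D" "(\<lambda>a. a \<otimes> b) ` A \<subseteq> D"
          using D[OF ab(2)] by blast
        have "x \<in> D" using D(3) ab by auto
        hence "y \<in> D" using D(2) x by auto
        thus "y \<in> X" using D(1) by auto
      qed
      thus False using rimg_eq[OF Xfin Xcar cc] XcX by simp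
    qed
  qed
qed

end

theorem mainTheorem2:
  fixes G (structure)
  assumes "comm_group G"
    and "A \<subseteq> carrier G" and "B \<subseteq> carrier G" and "C \<subseteq> carrier G"
    and "finite A" and "finite B" and "finite C"
    and "A \<noteq> {}" and "B \<noteq> {}" and "C \<noteq> {}"
    and "\<one> \<in> C"
  shows "(A <#> B) <#> C = A <#> B \<or> card ((A <#> B) <#> C) \<ge> card A + card B"
proof (cases "(A <#> B) <#> C = A <#> B")
  case True
  thus ?thesis by simp
next
  case False
  note ne = False
  interpret comm_group G by fact
  define X where "X = A <#> B"
  have Xfin: "finite X" unfolding X_def using assms finite_smult by blast
  have Xcar: "X \<subseteq> carrier G" unfolding X_def using assms smult_carrier by blast
  have XCfin: "finite (X <#> C)" using Xfin assms finite_smult by blast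
  have "\<exists>c\<in>C. (\<lambda>x. x \<otimes> c) ` X \<noteq> X"
  proof (rule ccontr)
    assume "\<not> ?thesis"
    hence allc: "\<And>c. c \<in> C \<Longrightarrow> (\<lambda>x. x \<otimes> c) ` X = X" by blast
    have "X <#> C = X"
    proof
      show "X <#> C \<subseteq> X"
      proof
        fix y assume "y \<in> X <#> C"
        then obtain x c where "x \<in> X" "c \<in> C" "y = x \<otimes> c" using mem_smult by blast
        thus "y \<in> X" using allc[of c] by blast
      qed
      show "X \<subseteq> X <#> C"
      proof
        fix x assume x: "x \<in> X"
        hence "x = x \<otimes> \<one>" using Xcar by auto
        thus "x \<in> X <#> C" using x assms(11) unfolding mem_smult by blast
      qed
    qed
    thus False using ne X_def by simp
  qed
  then obtain c where cC: "c \<in> C" and cne: "(\<lambda>x. x \<otimes> c) ` X \<noteq> X" by blast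
  have cc: "c \<in> carrier G" using cC assms by auto
  have "card A + card B \<le> card (X \<union> (\<lambda>x. x \<otimes> c) ` X)"
    unfolding X_def using key[of B A c] assms cc cne X_def by auto
  also have "\<dots> \<le> card (X <#> C)"
  proof (rule card_mono[OF XCfin])
    show "X \<union> (\<lambda>x. x \<otimes> c) ` X \<subseteq> X <#> C"
    proof
      fix y assume "y \<in> X \<union> (\<lambda>x. x \<otimes> c) ` X"
      thus "y \<in> X <#> C"
      proof
        assume y: "y \<in> X"
        hence "y = y \<otimes> \<one>" using Xcar by auto
        thus ?thesis using y assms(11) unfolding mem_smult by blast
      next
        assume "y \<in> (\<lambda>x. x \<otimes> c) ` X"
        thus ?thesis using cC unfolding mem_smult by blast
      qed
    qed
  qed
  finally show ?thesis using X_def by simp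
qed

end
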